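(* Let $K$ be a positive integer, let $\lambda_1^\star,\dots,\lambda_K^\star\ge0$, $C_1,\dots,C_K\ge0$, and $\mathcal{F}_1,\dots,\mathcal{F}_K\in(0,1)$. Set $\gamma_{-1}=\gamma_0=0$, $m_0=-1$, and for $k=1,\dots,K$ recursively $m_k=\max\{\mathcal{F}_k,\gamma_{k-1}\}$ and $\gamma_k=\frac1{k+1}+\frac{k}{k+1}m_k$. Let $\hat s_1\le\dots\le\hat s_K$ be integers with $\hat s_1\ge1$ and $1=s_0\le s_1\le\dots\le s_K$ be integers. Let $D_{k,s_k-1}\ge0$ ($k\in[K]$) be given, and let real numbers $B_{k,\ell}$ (integers $\ell\ge\hat s_k$) and $G_{k,\ell}$ (integers $\ell\ge s_k-1$) satisfy $0\le B_{k,\ell}\le2$ and, for all $k\in[K]$, $$B_{k,\ell}\le C_k\sum_{k'=1}^{k-1}\lambda_{k'}^\star G_{k',\ell-1}\quad(\ell\ge\hat s_k),$$ $$G_{k,\ell}\le\mathcal{F}_k^{\ell-s_k+1}D_{k,s_k-1}+\sum_{\ell'=s_k-1}^{\ell-1}\mathcal{F}_k^{\ell-\ell'}\big(B_{k,\ell'}+B_{k,\ell'-1}\big)+B_{k,\ell}\quad(\ell\ge s_k-1).$$ Define, recursively in $k$, $$\hat B_{k,\hat s_k}=C_k\sum_{k'=1}^{k-1}\lambda_{k'}^\star\hat G_{k',\hat s_k-1},\qquad \hat B_{k,\ell}=\min\big\{2,\ m_{k-1}^{\ell-\hat s_k}(\ell-\hat s_k+1)\hat B_{k,\hat s_k}\big\}\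 (\ell>\hat s_k),$$ $$\hat G_{k,s_k-1}=D_{k,s_k-1}+\hat B_{k,s_k-1}+\hat B_{k,s_k-2},\qquad \hat G_{k,\ell}=m_k^{\ell-s_k+1}(\ell-s_k+2)\hat G_{k,s_k-1}\ (\ell\ge s_k).$$ Suppose that for all $k\in[K]$: $\hat s_{k+1}\ge s_k$ (when $k<K$), $m_{k-1}^{s_k-\hat s_k-2}\le\frac{1}{s_k-\hat s_k-1}$, $s_k\ge\frac{km_{k-1}}{1-m_{k-1}}+\hat s_k+2$, and $\hat B_{k,\hat s_k}\le2$. Then for all $k\in[K]$: (1) $\hat B_{k,\ell}\ge B_{k,\ell}$ for all $\ell\ge\hat s_k$; and (2) $\hat G_{k,\ell}\ge G_{k,\ell}$ for all $\ell\ge s_k-1$.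
   Context: $[K]=\{1,\dots,K\}$. All indices $\ell,\ell'$ are integers. In the paper's application, $B_{k,\ell}=\|\mathbf{u}_{k,\ell}-\mathbf{u}_k^\star\|_2$ and $G_{k,\ell}=\|\mathbf{u}_k^\star-\mathbf{v}_{k,\ell}\|_2$ are distances between unit vectors and $D_{k,\ell}=\|\mathbf{v}_{k,\ell}-\mathbf{u}_{k,\ell}\|_2$, but the lemma is a statement about arbitrary sequences satisfying the displayed inequalities. *)

theory Defs
  imports Complex_Main
begin

fun gam :: "(nat \<Rightarrow> real) \<Rightarrow> nat \<Rightarrow> real" where
  "gam F 0 = 0"
| "gam F (Suc k) = 1 / (real k + 2) + (real k + 1) / (real k + 2) * max (F (Suc k)) (gam F k)"

definition mcoef :: "(nat \<Rightarrow> real) \<Rightarrow> nat \<Rightarrow> real" where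
  "mcoef F k = (if k = 0 then -1 else max (F k) (gam F (k - 1)))"

end

theory Submission
  imports Defs
begin

lemma gam_bounds:
  assumes "\<forall>k\<in>{1..K}. 0 < F k \<and> F k < 1"
  shows "k < K \<Longrightarrow> 0 \<le> gam F k \<and> gam F k < 1"
proof (induction k)
  case 0 then show ?case by simp
next
  case (Suc k)
  then have F: "0 < F (Suc k)" "F (Suc k) < 1" using assms by auto
  have ih: "0 \<le> gam F k" "gam F k < 1" using Suc by auto
  define x where "x = max (F (Suc k)) (gam F k)"
  have x: "0 \<le> x" "x < 1" using F ih unfolding x_def by auto
  have "gam F (Suc k) = (1 + (real k + 1) * x) / (real k + 2)"
    by (simp add: x_def field_simps)
  moreover have "0 \<le> (1 + (real k + 1) * x) / (real k + 2)" using x by simp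
  moreover have "(1 + (real k + 1) * x) / (real k + 2) < 1"
  proof -
    have "(real k + 1) * x < (real k + 1) * 1" using x by (intro mult_strict_left_mono) auto
    then show ?thesis by (simp add: divide_less_eq algebra_simps)
  qed
  ultimately show ?case by simp
qed

lemma mcoef_bounds:
  assumes "\<forall>k\<in>{1..K}. 0 < F k \<and> F k < 1" "k \<in> {1..K}"
  shows "0 < mcoef F k" "mcoef F k < 1" "F k \<le> mcoef F k"
proof -
  have g: "0 \<le> gam F (k-1) \<and> gam F (k-1) < 1" using gam_bounds[OF assms(1)] assms(2) by auto
  have "0 < F k" "F k < 1" using assms by auto
  then show "0 < mcoef F k" "mcoef F k < 1" "F k \<le> mcoef F k"
    using g assms unfolding mcoef_def by (auto simp: less_max_iff_disj)
qed

lemma mcoef_step: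
  assumes "\<forall>k\<in>{1..K}. 0 < F k \<and> F k < 1" "k \<ge> 2" "k \<le> K"
  shows "mcoef F k \<ge> 1 / real k + (real k - 1) / real k * mcoef F (k - 1)"
proof -
  obtain k0 where k0: "k = Suc (Suc k0)" using assms(2) by (metis add_2_eq_Suc le_Suc_ex)
  have "mcoef F k \<ge> gam F (Suc k0)" unfolding mcoef_def k0 by simp
  moreover have "gam F (Suc k0) = 1 / real k + (real k - 1) / real k * mcoef F (k - 1)"
    unfolding k0 mcoef_def by (simp add: add.commute)
  ultimately show ?thesis by simp
qed

lemma mcoef_mono1:
  assumes "\<forall>k\<in>{1..K}. 0 < F k \<and> F k < 1" "k \<ge> 2" "k \<le> K"
  shows "mcoef F (k-1) \<le> mcoef F k"
proof -
  have m: "mcoef F (k-1) < 1" using mcoef_bounds(2)[OF assms(1), of "k-1"] assms by force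
  have st: "mcoef F k \<ge> 1 / real k + (real k - 1) / real k * mcoef F (k - 1)"
    by (rule mcoef_step[OF assms])
  have "mcoef F (k-1) = 1/real k * mcoef F (k-1) + (real k - 1) / real k * mcoef F (k - 1)"
    using assms(2) by (simp add: field_simps)
  also have "\<dots> \<le> 1 / real k + (real k - 1) / real k * mcoef F (k - 1)"
    using m assms(2) by (simp add: divide_simps)
  finally show ?thesis using st by linarith
qed

lemma mcoef_mono:
  assumes "\<forall>k\<in>{1..K}. 0 < F k \<and> F k < 1" "1 \<le> k'" "k' \<le> k" "k \<le> K"
  shows "mcoef F k' \<le> mcoef F k"
  using assms(3,4)
proof (induction k rule: dec_induct)
  case base then show ?case by simp
next
  case (step n)
  then have "mcoef F (Suc n - 1) \<le> mcoef F (Suc n)"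
    using mcoef_mono1[OF assms(1), of "Suc n"] assms(2) by auto
  then show ?case using step by auto
qed

lemma ratio:
  fixes m M k j :: real
  assumes "0 < m" "m < 1" "k \<ge> 1" "M \<ge> 1/k + (k-1)/k * m" "j + 1 \<ge> k * m / (1 - m)" "j \<ge> 0"
  shows "m * (j + 2) \<le> M * (j + 1)"
proof -
  have a: "(j+1) * (1-m) \<ge> k * m" using assms(2,5) by (simp add: pos_divide_le_eq)
  have "k * M * (j+1) \<ge> k * (1/k + (k-1)/k * m) * (j+1)"
    using assms by (intro mult_right_mono mult_left_mono) auto
  also have "k * (1/k + (k-1)/k * m) * (j+1) = (j+1)*(1-m) + k*m*(j+1)"
    using assms(3) by (simp add: field_simps)
  finally have "k * M * (j+1) \<ge> k * m * (j + 2)" using a by (simp add: algebra_simps)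
  then show ?thesis using assms(3) by (simp add: mult.assoc)
qed


lemma sum_int_shift:
  fixes a :: int and g :: "int \<Rightarrow> real"
  shows "(\<Sum>x\<in>{a..a + int n - 1}. g x) = (\<Sum>i<n. g (a + int i))"
proof (induction n)
  case 0 then show ?case by simp
next
  case (Suc n)
  have "{a..a + int (Suc n) - 1} = insert (a + int n) {a..a + int n - 1}" by auto
  then show ?case using Suc by simp
qed

lemma geo_seq:
  fixes M :: real and b :: "nat \<Rightarrow> real"
  assumes "0 \<le> M" "\<forall>i. b (Suc i) \<le> M * b i" "\<forall>i. 0 \<le> b i"
  shows "b (j + i) \<le> M ^ i * b j"
proof (induction i)
  case 0 then show ?case by simp
next
  case (Suc i)
  have "b (j + Suc i) \<le> M * b (j + i)" using assms(2) by simp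
  also have "\<dots> \<le> M * (M ^ i * b j)" using Suc assms(1) by (intro mult_left_mono) auto
  finally show ?case by simp
qed

lemma G_abstract:
  fixes Fk M D :: real and b Bv :: "nat \<Rightarrow> real" and n :: nat
  assumes "0 \<le> Fk" "Fk \<le> M" "0 \<le> D" "\<forall>i. 0 \<le> b i" "\<forall>i. b (Suc i) \<le> M * b i"
    "\<forall>i. 0 \<le> Bv i \<and> Bv i \<le> b i"
  shows "Fk ^ n * D + (\<Sum>i<n. Fk ^ (n - i) * (Bv (Suc i) + Bv i)) + Bv (Suc n)
         \<le> M ^ n * (real n + 1) * (D + b 1 + b 0)"
proof -
  have M0: "0 \<le> M" using assms by linarith
  have b0: "b i \<le> M ^ i * b 0" for i using geo_seq[OF M0 assms(5,4), of 0 i] by simp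
  have b1: "b (Suc i) \<le> M ^ i * b 1" for i using geo_seq[OF M0 assms(5,4), of 1 i] by simp
  have trm: "Fk ^ (n - i) * (Bv (Suc i) + Bv i) \<le> M ^ n * (b 1 + b 0)" if "i < n" for i
  proof -
    have "Bv (Suc i) + Bv i \<le> M ^ i * (b 1 + b 0)"
      using b0[of i] b1[of i] assms(6) by (smt (verit) distrib_left)
    moreover have "Fk ^ (n - i) \<le> M ^ (n - i)" using assms(1,2) by (intro power_mono) auto
    moreover have "0 \<le> Bv (Suc i) + Bv i" using assms(6) by (smt (verit))
    ultimately have "Fk ^ (n - i) * (Bv (Suc i) + Bv i) \<le> M ^ (n - i) * (M ^ i * (b 1 + b 0))"
      using M0 by (intro mult_mono) auto
    also have "\<dots> = M ^ n * (b 1 + b 0)" using that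
      by (simp add: mult.assoc[symmetric] power_add[symmetric])
    finally show ?thesis .
  qed
  have "(\<Sum>i<n. Fk ^ (n - i) * (Bv (Suc i) + Bv i)) \<le> (\<Sum>i<n. M ^ n * (b 1 + b 0))"
    using trm by (intro sum_mono) auto
  also have "\<dots> = real n * (M ^ n * (b 1 + b 0))" by simp
  finally have S: "(\<Sum>i<n. Fk ^ (n - i) * (Bv (Suc i) + Bv i)) \<le> real n * (M ^ n * (b 1 + b 0))" .
  have T: "Bv (Suc n) \<le> M ^ n * b 1" using b1[of n] assms(6) by (smt (verit))
  have U: "Fk ^ n * D \<le> M ^ n * D" using assms(1,2,3) by (intro mult_right_mono power_mono) auto
  have V: "0 \<le> M ^ n * b 0" "0 \<le> M ^ n * D" using M0 assms(3,4) by auto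
  have "M ^ n * (real n + 1) * (D + b 1 + b 0)
        = M ^ n * D + real n * (M ^ n * (b 1 + b 0)) + M ^ n * b 1 + M ^ n * b 0 + real n * (M ^ n * D)"
    by (simp add: algebra_simps)
  moreover have "0 \<le> real n * (M ^ n * D)" using V by simp
  ultimately show ?thesis using S T U V by linarith
qed

lemma f_seq:
  fixes m M :: real and j0 :: nat
  assumes "0 < m" "M \<le> 1" "\<And>j. j \<ge> j0 \<Longrightarrow> m * (real j + 2) \<le> M * (real j + 1)"
    "m ^ j0 * (real j0 + 1) \<le> 1"
  shows "j \<ge> j0 \<Longrightarrow> m ^ Suc j * (real (Suc j) + 1) \<le> M * (m ^ j * (real j + 1))"
    and "j \<ge> j0 \<Longrightarrow> m ^ j * (real j + 1) \<le> 1"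
proof -
  have step: "m ^ Suc j * (real (Suc j) + 1) \<le> M * (m ^ j * (real j + 1))" if "j \<ge> j0" for j
  proof -
    have "m ^ Suc j * (real (Suc j) + 1) = m ^ j * (m * (real j + 2))" by (simp add: algebra_simps)
    also have "\<dots> \<le> m ^ j * (M * (real j + 1))" using assms(1) assms(3)[OF that] by (intro mult_left_mono) auto
    finally show ?thesis by (simp add: algebra_simps)
  qed
  note stp = step
  then show "j \<ge> j0 \<Longrightarrow> m ^ Suc j * (real (Suc j) + 1) \<le> M * (m ^ j * (real j + 1))" by blast
  show "j \<ge> j0 \<Longrightarrow> m ^ j * (real j + 1) \<le> 1"
  proof (induction j rule: dec_induct)
    case base then show ?case using assms(4) by simp
  next
    case (step j)
    have "m ^ Suc j * (real (Suc j) + 1) \<le> M * (m ^ j * (real j + 1))" using step(1) stp by blast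
    also have "\<dots> \<le> 1 * 1" using step(3) assms(1,2)
      by (intro mult_mono) auto
    finally show ?case by simp
  qed
qed

lemma C_abstract:
  fixes m' m g0 :: real and a j :: nat
  assumes "0 \<le> m'" "m' \<le> m" "0 \<le> g0"
  shows "m' ^ (a + j) * (real (a + j) + 1) * g0 \<le> m ^ j * (real j + 1) * (m' ^ a * (real a + 1) * g0)"
proof -
  have "m' ^ j \<le> m ^ j" using assms by (intro power_mono) auto
  moreover have "real (a + j) + 1 \<le> (real j + 1) * (real a + 1)" by (simp add: algebra_simps)
  ultimately have "m' ^ j * (real (a + j) + 1) \<le> m ^ j * ((real j + 1) * (real a + 1))"
    using assms by (intro mult_mono) auto
  then have "m' ^ a * (m' ^ j * (real (a + j) + 1)) * g0 \<le> m' ^ a * (m ^ j * ((real j + 1) * (real a + 1))) * g0"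
    using assms by (intro mult_right_mono mult_left_mono) auto
  then show ?thesis by (simp add: power_add algebra_simps)
qed



theorem lemma3:
  fixes K :: nat
    and lam C F D :: "nat \<Rightarrow> real"
    and sh s :: "nat \<Rightarrow> int"
    and B G Bh Gh :: "nat \<Rightarrow> int \<Rightarrow> real"
  assumes K_pos: "K \<ge> 1"
    and lam_nn: "\<forall>k\<in>{1..K}. lam k \<ge> 0"
    and C_nn: "\<forall>k\<in>{1..K}. C k \<ge> 0"
    and F_range: "\<forall>k\<in>{1..K}. 0 < F k \<and> F k < 1"
    and sh_mono: "\<forall>k\<in>{1..<K}. sh k \<le> sh (k + 1)"
    and sh_1: "sh 1 \<ge> 1"
    and s_0: "s 0 = 1"
    and s_mono: "\<forall>k<K. s k \<le> s (k + 1)"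
    and D_nn: "\<forall>k\<in>{1..K}. D k \<ge> 0"
    and B_range: "\<forall>k\<in>{1..K}. \<forall>l \<ge> sh k. 0 \<le> B k l \<and> B k l \<le> 2"
    and B_rec: "\<forall>k\<in>{1..K}. \<forall>l \<ge> sh k.
                  B k l \<le> C k * (\<Sum>k'\<in>{1..<k}. lam k' * G k' (l - 1))"
    and G_rec: "\<forall>k\<in>{1..K}. \<forall>l \<ge> s k - 1.
                  G k l \<le> F k powi (l - s k + 1) * D k
                         + (\<Sum>l'\<in>{s k - 1 .. l - 1}. F k powi (l - l') * (B k l' + B k (l' - 1)))
                         + B k l"
    and Bh_first: "\<forall>k\<in>{1..K}. Bh k (sh k) = C k * (\<Sum>k'\<in>{1..<k}. lam k' * Gh k' (sh k - 1))"
    and Bh_later: "\<forall>k\<in>{1..K}. \<forall>l > sh k.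
                  Bh k l = min 2 (mcoef F (k - 1) powi (l - sh k) * of_int (l - sh k + 1) * Bh k (sh k))"
    and Gh_first: "\<forall>k\<in>{1..K}. Gh k (s k - 1) = D k + Bh k (s k - 1) + Bh k (s k - 2)"
    and Gh_later: "\<forall>k\<in>{1..K}. \<forall>l \<ge> s k.
                  Gh k l = mcoef F k powi (l - s k + 1) * of_int (l - s k + 2) * Gh k (s k - 1)"
    and sh_s: "\<forall>k\<in>{1..<K}. sh (k + 1) \<ge> s k"
    and m_pow: "\<forall>k\<in>{1..K}. mcoef F (k - 1) powi (s k - sh k - 2) \<le> 1 / of_int (s k - sh k - 1)"
    and s_large: "\<forall>k\<in>{1..K}. of_int (s k) \<ge> real k * mcoef F (k - 1) / (1 - mcoef F (k - 1)) + of_int (sh k) + 2"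
    and Bh_le2: "\<forall>k\<in>{1..K}. Bh k (sh k) \<le> 2"
  shows "\<forall>k\<in>{1..K}. (\<forall>l \<ge> sh k. Bh k l \<ge> B k l) \<and> (\<forall>l \<ge> s k - 1. Gh k l \<ge> G k l)"
  proof -
  have mk: "0 < mcoef F k" "mcoef F k < 1" "F k \<le> mcoef F k" if "k \<in> {1..K}" for k
    using mcoef_bounds[OF F_range that] by auto
  have shm: "sh a \<le> sh b" if "1 \<le> a" "a \<le> b" "b \<le> K" for a b
    using that(2,3)
  proof (induction b rule: dec_induct)
    case base then show ?case by simp
  next
    case (step n)
    have "sh n \<le> sh (n + 1)" using sh_mono step that(1) by auto
    then show ?case using step by simp
  qed
  have shs: "s k' \<le> sh k" if "1 \<le> k'" "k' < k" "k \<le> K" for k k'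
  proof -
    have "s k' \<le> sh (k' + 1)" using sh_s that by auto
    moreover have "sh (k' + 1) \<le> sh k" using shm[of "k'+1" k] that by auto
    ultimately show ?thesis by simp
  qed
  have sge: "sh k + 2 \<le> s k" if "k \<in> {1..K}" for k
  proof -
    have "real k * mcoef F (k - 1) / (1 - mcoef F (k - 1)) > -1"
    proof (cases "k = 1")
      case True then show ?thesis by (simp add: mcoef_def)
    next
      case False
      then have "k - 1 \<in> {1..K}" using that by auto
      from mk[OF this] have "0 \<le> real k * mcoef F (k - 1) / (1 - mcoef F (k - 1))" by simp
      then show ?thesis by linarith
    qed
    moreover have "of_int (s k) \<ge> real k * mcoef F (k - 1) / (1 - mcoef F (k - 1)) + of_int (sh k) + 2"
      using s_large that by blast
    ultimately have "of_int (s k) > of_int (sh k) + (1::real)" by linarith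
    then show ?thesis by linarith
  qed
  have main: "k \<in> {1..K} \<longrightarrow> ((\<forall>l \<ge> sh k. 0 \<le> Bh k l \<and> B k l \<le> Bh k l) \<and>
      (\<forall>l \<ge> s k - 1. 0 \<le> Gh k l \<and> G k l \<le> Gh k l))" for k
  proof (induction k rule: less_induct)
    case (less k)
    show ?case
    proof
      assume kK: "k \<in> {1..K}"
      have IH: "(\<forall>l \<ge> sh k'. 0 \<le> Bh k' l \<and> B k' l \<le> Bh k' l) \<and>
          (\<forall>l \<ge> s k' - 1. 0 \<le> Gh k' l \<and> G k' l \<le> Gh k' l)" if "k' \<in> {1..<k}" for k'
        using less.IH[of k'] that kK by auto
      define bb where "bb = Bh k (sh k)"
      define m where "m = mcoef F (k - 1)"
      define M where "M = mcoef F k"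
      have M: "0 < M" "M < 1" "F k \<le> M" using mk[OF kK] unfolding M_def by auto
      have bb2: "bb \<le> 2" using Bh_le2 kK bb_def by auto
      have Ghf: "Gh k' (s k' - 1 + int n) = mcoef F k' ^ n * (real n + 1) * Gh k' (s k' - 1)"
        if "k' \<in> {1..K}" for k' n
      proof (cases "n = 0")
        case True then show ?thesis by simp
      next
        case False
        have "Gh k' (s k' - 1 + int n) = mcoef F k' powi (s k' - 1 + int n - s k' + 1)
              * of_int (s k' - 1 + int n - s k' + 2) * Gh k' (s k' - 1)"
          using Gh_later that False by auto
        also have "\<dots> = mcoef F k' ^ n * (real n + 1) * Gh k' (s k' - 1)" by simp
        finally show ?thesis .
      qed
      have step1: "0 \<le> bb \<and> B k (sh k) \<le> bb"
      proof -
        have t: "0 \<le> lam k' * Gh k' (sh k - 1) \<and> lam k' * G k' (sh k - 1) \<le> lam k' * Gh k' (sh k - 1)"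
          if "k' \<in> {1..<k}" for k'
        proof -
          have "s k' - 1 \<le> sh k - 1" using shs[of k' k] that kK by auto
          then have "0 \<le> Gh k' (sh k - 1) \<and> G k' (sh k - 1) \<le> Gh k' (sh k - 1)" using IH[OF that] by auto
          moreover have "0 \<le> lam k'" using lam_nn that kK by auto
          ultimately show ?thesis by (auto intro: mult_left_mono)
        qed
        have "0 \<le> (\<Sum>k'\<in>{1..<k}. lam k' * Gh k' (sh k - 1))" using t by (intro sum_nonneg) auto
        moreover have "(\<Sum>k'\<in>{1..<k}. lam k' * G k' (sh k - 1)) \<le> (\<Sum>k'\<in>{1..<k}. lam k' * Gh k' (sh k - 1))"
          using t by (intro sum_mono) auto
        moreover have "0 \<le> C k" using C_nn kK by auto
        moreover have "B k (sh k) \<le> C k * (\<Sum>k'\<in>{1..<k}. lam k' * G k' (sh k - 1 ))"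
          using B_rec kK by auto
        moreover have "bb = C k * (\<Sum>k'\<in>{1..<k}. lam k' * Gh k' (sh k - 1))"
          unfolding bb_def using Bh_first kK by auto
        ultimately show ?thesis
          by (meson mult_left_mono mult_nonneg_nonneg order_trans)
      qed
      have Bhf: "Bh k (sh k + int j) = min 2 (m ^ j * (real j + 1) * bb)" for j
      proof (cases "j = 0")
        case True then show ?thesis using bb2 bb_def by simp
      next
        case False
        have "Bh k (sh k + int j) = min 2 (m powi (sh k + int j - sh k) * of_int (sh k + int j - sh k + 1) * bb)"
          using Bh_later kK False unfolding m_def bb_def by auto
        then show ?thesis by simp
      qed
      have k1bb: "bb = 0" if "k = 1"
        using Bh_first kK that unfolding bb_def by auto
      have mpos: "0 < m" "m < 1" if "k \<ge> 2"
      proof -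
        have "k - 1 \<in> {1..K}" using kK that by auto
        then show "0 < m" "m < 1" using mk[of "k-1"] unfolding m_def by auto
      qed
      have Bhnn: "0 \<le> Bh k l" if "l \<ge> sh k" for l
      proof -
        define j where "j = nat (l - sh k)"
        have j: "l = sh k + int j" using that unfolding j_def by simp
        show ?thesis
        proof (cases "k = 1")
          case True then show ?thesis unfolding j using Bhf[of j] k1bb[OF True] by simp
        next
          case False then have "k \<ge> 2" using kK by auto
          then have "0 < m" using mpos by blast
          then show ?thesis unfolding j using Bhf[of j] step1 by simp
        qed
      qed
      have step4: "B k (sh k + int j) \<le> m ^ j * (real j + 1) * bb" if "j \<ge> 1" for j
      proof -
        have t: "lam k' * G k' (sh k + int j - 1) \<le> m ^ j * (real j + 1) * (lam k' * Gh k' (sh k - 1))"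
          if "k' \<in> {1..<k}" for k'
        proof -
          have k'K: "k' \<in> {1..K}" using that kK by auto
          have k2: "k \<ge> 2" using that by auto
          define a where "a = nat (sh k - s k')"
          have a: "sh k - 1 = s k' - 1 + int a" using shs[of k' k] that kK unfolding a_def by auto
          have a2: "sh k + int j - 1 = s k' - 1 + int (a + j)" using a by simp
          have g0: "0 \<le> Gh k' (s k' - 1)" using IH[OF that] by auto
          have "G k' (sh k + int j - 1) \<le> Gh k' (sh k + int j - 1)" using IH[OF that] a2 by auto
          also have "\<dots> = mcoef F k' ^ (a + j) * (real (a + j) + 1) * Gh k' (s k' - 1)"
            unfolding a2 by (rule Ghf[OF k'K])
          also have "\<dots> \<le> m ^ j * (real j + 1) * (mcoef F k' ^ a * (real a + 1) * Gh k' (s k' - 1))"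
          proof -
            have "mcoef F k' \<le> m" unfolding m_def
              using mcoef_mono[OF F_range, of k' "k-1"] that kK by auto
            moreover have "0 \<le> mcoef F k'" using mk[OF k'K] by simp
            ultimately show ?thesis using C_abstract g0 by blast
          qed
          also have "\<dots> = m ^ j * (real j + 1) * Gh k' (sh k - 1)" unfolding a Ghf[OF k'K] ..
          finally have "G k' (sh k + int j - 1) \<le> m ^ j * (real j + 1) * Gh k' (sh k - 1)" .
          moreover have "0 \<le> lam k'" using lam_nn k'K by auto
          ultimately have "lam k' * G k' (sh k + int j - 1) \<le> lam k' * (m ^ j * (real j + 1) * Gh k' (sh k - 1))"
            by (rule mult_left_mono)
          then show ?thesis by (simp add: algebra_simps)
        qed
        have "B k (sh k + int j) \<le> C k * (\<Sum>k'\<in>{1..<k}. lam k' * G k' (sh k + int j - 1))"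
          using B_rec kK by auto
        also have "\<dots> \<le> C k * (\<Sum>k'\<in>{1..<k}. m ^ j * (real j + 1) * (lam k' * Gh k' (sh k - 1)))"
          using C_nn kK t by (intro mult_left_mono sum_mono) auto
        also have "\<dots> = m ^ j * (real j + 1) * bb"
        proof -
          have "bb = C k * (\<Sum>k'\<in>{1..<k}. lam k' * Gh k' (sh k - 1))"
            unfolding bb_def using Bh_first kK by auto
          moreover have "(\<Sum>k'\<in>{1..<k}. m ^ j * (real j + 1) * (lam k' * Gh k' (sh k - 1)))
              = m ^ j * (real j + 1) * (\<Sum>k'\<in>{1..<k}. lam k' * Gh k' (sh k - 1))"
            by (rule sum_distrib_left[symmetric])
          ultimately show ?thesis by simp
        qed
        finally show ?thesis .
      qed
      have partB: "\<forall>l \<ge> sh k. 0 \<le> Bh k l \<and> B k l \<le> Bh k l"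
      proof (intro allI impI conjI)
        fix l assume l: "l \<ge> sh k"
        show "0 \<le> Bh k l" using Bhnn l .
        define j where "j = nat (l - sh k)"
        have j: "l = sh k + int j" using l unfolding j_def by simp
        show "B k l \<le> Bh k l"
        proof (cases "j = 0")
          case True then show ?thesis using j step1 bb_def by simp
        next
          case False
          then have "B k l \<le> m ^ j * (real j + 1) * bb" using step4[of j] j by simp
          moreover have "B k l \<le> 2" using B_range kK l by auto
          ultimately show ?thesis using Bhf j by simp
        qed
      qed
      define b where "b i = Bh k (s k - 2 + int i)" for i
      define Bv where "Bv i = B k (s k - 2 + int i)" for i
      have sk: "sh k + 2 \<le> s k" using sge kK by simp
      have bnn: "\<forall>i. 0 \<le> b i" unfolding b_def using Bhnn sk by auto
      have Bvb: "\<forall>i. 0 \<le> Bv i \<and> Bv i \<le> b i" unfolding b_def Bv_def using partB B_range kK sk by auto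
      have bdec: "\<forall>i. b (Suc i) \<le> M * b i"
      proof (cases "k = 1")
        case True
        have "b i = 0" for i
        proof -
          have e: "s k - 2 + int i = sh k + int (nat (s k - 2 - sh k) + i)" using sk by simp
          show ?thesis unfolding b_def e Bhf k1bb[OF True] by simp
        qed
        then show ?thesis by simp
      next
        case False
        then have k2: "k \<ge> 2" using kK by auto
        note mp = mpos[OF k2]
        define j0 where "j0 = nat (s k - 2 - sh k)"
        have j0: "s k - 2 = sh k + int j0" using sk unfolding j0_def by simp
        have Mst: "M \<ge> 1 / real k + (real k - 1) / real k * m"
          using mcoef_step[OF F_range k2] kK unfolding M_def m_def by auto
        have slk: "real j0 \<ge> real k * m / (1 - m)"
        proof -
          have "of_int (s k) \<ge> real k * m / (1 - m) + of_int (sh k) + 2"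
            using s_large kK unfolding m_def by blast
          moreover have "of_int (s k) = of_int (sh k) + real j0 + (2::real)" using j0 by linarith
          ultimately show ?thesis by linarith
        qed
        have rat: "m * (real j + 2) \<le> M * (real j + 1)" if "j \<ge> j0" for j
          using ratio[OF mp, of "real k" M "real j"] Mst slk that k2 by auto
        have pw: "m ^ j0 * (real j0 + 1) \<le> 1"
        proof -
          have "m powi (s k - sh k - 2) \<le> 1 / of_int (s k - sh k - 1)" using m_pow kK unfolding m_def by auto
          moreover have "s k - sh k - 2 = int j0" "s k - sh k - 1 = int j0 + 1" using j0 by auto
          ultimately have "m ^ j0 \<le> 1 / (real j0 + 1)" by simp
          then show ?thesis by (simp add: field_simps)
        qed
        note fs = f_seq[OF mp(1) _ rat pw]
        have Ml: "M \<le> 1" using M by simp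
        have bf: "b i = m ^ (j0 + i) * (real (j0 + i) + 1) * bb" for i
        proof -
          have "m ^ (j0 + i) * (real (j0 + i) + 1) \<le> 1" using fs(2)[OF Ml, of "j0 + i"] by simp
          then have "m ^ (j0 + i) * (real (j0 + i) + 1) * bb \<le> 2"
          proof -
            have "m ^ (j0 + i) * (real (j0 + i) + 1) * bb \<le> 1 * bb"
              using step1 \<open>m ^ (j0 + i) * (real (j0 + i) + 1) \<le> 1\<close> by (intro mult_right_mono) auto
            then show ?thesis using bb2 by simp
          qed
          moreover have e: "s k - 2 + int i = sh k + int (j0 + i)" using j0 by simp
          ultimately show ?thesis unfolding b_def e Bhf by simp
        qed
        show ?thesis
        proof
          fix i
          have "m ^ Suc (j0 + i) * (real (Suc (j0 + i)) + 1) \<le> M * (m ^ (j0 + i) * (real (j0 + i) + 1))"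
            using fs(1)[OF Ml, of "j0 + i"] by simp
          then have "m ^ Suc (j0 + i) * (real (Suc (j0 + i)) + 1) * bb \<le> M * (m ^ (j0 + i) * (real (j0 + i) + 1)) * bb"
            using step1 by (intro mult_right_mono) auto
          then show "b (Suc i) \<le> M * b i" unfolding bf by (simp add: algebra_simps)
        qed
      qed
      have Dk: "0 \<le> D k" using D_nn kK by auto
      have Gh0: "Gh k (s k - 1) = D k + b 1 + b 0" using Gh_first kK unfolding b_def by simp
      have partG: "\<forall>l \<ge> s k - 1. 0 \<le> Gh k l \<and> G k l \<le> Gh k l"
      proof (intro allI impI)
        fix l assume l: "l \<ge> s k - 1"
        define n where "n = nat (l - (s k - 1))"
        have n: "l = s k - 1 + int n" using l unfolding n_def by simp
        have eq: "Gh k l = M ^ n * (real n + 1) * (D k + b 1 + b 0)"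
          using Ghf[OF kK, of n] n Gh0 unfolding M_def by simp
        have nn: "0 \<le> Gh k l" unfolding eq using M Dk bnn by simp
        have "G k l \<le> F k powi (l - s k + 1) * D k
               + (\<Sum>l'\<in>{s k - 1 .. l - 1}. F k powi (l - l') * (B k l' + B k (l' - 1))) + B k l"
          using G_rec kK l by auto
        also have "\<dots> = F k ^ n * D k + (\<Sum>i<n. F k ^ (n - i) * (Bv (Suc i) + Bv i)) + Bv (Suc n)"
        proof -
          have "(\<Sum>l'\<in>{s k - 1 .. l - 1}. F k powi (l - l') * (B k l' + B k (l' - 1)))
              = (\<Sum>i<n. F k powi (l - (s k - 1 + int i)) * (B k (s k - 1 + int i) + B k (s k - 1 + int i - 1)))"
            using sum_int_shift[of "\<lambda>l'. F k powi (l - l') * (B k l' + B k (l' - 1))" "s k - 1" n] n by simp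
          also have "\<dots> = (\<Sum>i<n. F k ^ (n - i) * (Bv (Suc i) + Bv i))"
          proof (rule sum.cong)
            fix i assume "i \<in> {..<n}"
            then have e1: "l - (s k - 1 + int i) = int (n - i)" using n by auto
            have e2: "B k (s k - 1 + int i) = Bv (Suc i)" unfolding Bv_def by (simp add: algebra_simps)
            have e3: "B k (s k - 1 + int i - 1) = Bv i" unfolding Bv_def by (simp add: algebra_simps)
            show "F k powi (l - (s k - 1 + int i)) * (B k (s k - 1 + int i) + B k (s k - 1 + int i - 1))
                = F k ^ (n - i) * (Bv (Suc i) + Bv i)" unfolding e1 e2 e3 by simp
          qed simp
          finally show ?thesis unfolding Bv_def using n
            by (simp add: add.commute add_diff_eq)
        qed
        also have "\<dots> \<le> Gh k l" unfolding eq
          using G_abstract[of "F k" M "D k" b Bv n] F_range kK M Dk bnn bdec Bvb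
          by (simp add: less_imp_le)
        finally show "0 \<le> Gh k l \<and> G k l \<le> Gh k l" using nn by simp
      qed
      show "((\<forall>l \<ge> sh k. 0 \<le> Bh k l \<and> B k l \<le> Bh k l) \<and>
          (\<forall>l \<ge> s k - 1. 0 \<le> Gh k l \<and> G k l \<le> Gh k l))" using partB partG by blast
    qed
  qed
  show ?thesis using main by auto
qed

end
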